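(* Let $\Phi : M_m \to M_n$ be a transpose-preserving linear map. If $W^{1+i}_{\min}(C_\Phi) \ge 0$, then there exist matrices $A_1,\dots,A_k \in M_{n,m}$ and a linear map $\Psi: M_m\to M_n$ with $\Psi(X) = 0$ for every symmetric $X\in M_m$, such that \[ \Phi(X) = \sum_j A_j X A_j^T + \Psi(X) \quad\text{for all } X\in M_m; \] consequently $\Phi$ is positive.
   Context: $M_{n,m}$ denotes real $n\times m$ matrices, $M_n = M_{n,n}$, and $M_m\otimes M_n$ is identified with $M_{mn}$ via the Kronecker product. A linear map $\Phi: M_m\to M_n$ is transpose-preserving if $\Phi(X^T) = \Phi(X)^T$ for all $X$; it is positive if $\Phi(X)$ is positive semidefinite whenever $X$ is symmetric positive semidefinite. The Choi matrix is $C_\Phi = \sum_{i,j=1}^m E_{i,j}\otimes\Phi(E_{i,j})$, with $E_{i,j}$ the matrix units. For $A=\sum_j X_j\otimes Y_j\in M_m\otimes M_n$, the partial transpose is $A^\Gamma = \sum_j X_j\otimes Y_j^T$. The numerical range of $A\in M_N(\mathbb{C})$ is $W(A) = \{\mathbf{x}^*A\mathbf{x} : \mathbf{x}\in\mathbb{C}^N, \|\mathbf{x}\|=1\}$. For real $B$, $W^{1+i}(B) = \{c\in\mathbb{R} : c(1+i)\in W(B+iB^\Gamma)\}$, a nonempty compact interval with minimum $W^{1+i}_{\min}(B)$. *)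

theory Defs
  imports "HOL-Analysis.Analysis"
begin

text \<open>M_m \<otimes> M_n is identified with M_{mn} by indexing rows/columns with pairs
  ('m \<times> 'n): (X \<otimes> Y)_{(i,k),(j,l)} = X_{ij} Y_{kl}.\<close>

definition mat_unit :: "'m::finite \<Rightarrow> 'm \<Rightarrow> real^'m^'m" where
  "mat_unit i j = (\<chi> a b. if a = i \<and> b = j then 1 else 0)"

definition transpose_preserving :: "(real^'m::finite^'m \<Rightarrow> real^'n::finite^'n) \<Rightarrow> bool" where
  "transpose_preserving \<Phi> \<longleftrightarrow> (\<forall>X. \<Phi> (transpose X) = transpose (\<Phi> X))"

definition psd :: "real^'n::finite^'n \<Rightarrow> bool" where
  "psd X \<longleftrightarrow> transpose X = X \<and> (\<forall>v. 0 \<le> v \<bullet> (X *v v))"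

definition positive_map :: "(real^'m::finite^'m \<Rightarrow> real^'n::finite^'n) \<Rightarrow> bool" where
  "positive_map \<Phi> \<longleftrightarrow> (\<forall>X. psd X \<longrightarrow> psd (\<Phi> X))"

text \<open>Choi matrix C = \<Sum>_{i,j} E_ij \<otimes> \<Phi>(E_ij), entry at ((i,k),(j,l)) is \<Phi>(E_ij)_{kl}.\<close>
definition choi :: "(real^'m::finite^'m \<Rightarrow> real^'n::finite^'n) \<Rightarrow> real^('m \<times> 'n)^('m \<times> 'n)" where
  "choi \<Phi> = (\<chi> r s. \<Sum>i\<in>UNIV. \<Sum>j\<in>UNIV.
       (mat_unit i j $ fst r $ fst s) * (\<Phi> (mat_unit i j) $ snd r $ snd s))"

text \<open>Partial transpose: (X \<otimes> Y)^\<Gamma> = X \<otimes> Y^T.\<close>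
definition partial_transpose :: "real^('m::finite \<times> 'n::finite)^('m \<times> 'n) \<Rightarrow> real^('m \<times> 'n)^('m \<times> 'n)" where
  "partial_transpose B = (\<chi> r s. B $ (fst r, snd s) $ (fst s, snd r))"

definition numerical_range :: "complex^'N::finite^'N \<Rightarrow> complex set" where
  "numerical_range A = {(\<Sum>i\<in>UNIV. cnj (x $ i) * (A *v x) $ i) | x. norm x = 1}"

definition W1i :: "real^('m::finite \<times> 'n::finite)^('m \<times> 'n) \<Rightarrow> real set" where
  "W1i B = {c. complex_of_real c * (1 + \<i>) \<in>
      numerical_range (\<chi> r s. complex_of_real (B $ r $ s)
                               + \<i> * complex_of_real (partial_transpose B $ r $ s))}"

definition W1i_min :: "real^('m::finite \<times> 'n::finite)^('m \<times> 'n) \<Rightarrow> real" where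
  "W1i_min B = Inf (W1i B)"

end

theory Submission
  imports Defs
begin


definition bf :: "real^'N::finite^'N \<Rightarrow> real^'N \<Rightarrow> real^'N \<Rightarrow> real" where
  "bf M a b = (\<Sum>r\<in>UNIV. \<Sum>s\<in>UNIV. M$r$s * a$r * b$s)"

lemma bf_add_scale:
  "bf M (a + c *\<^sub>R b) (a + c *\<^sub>R b) = bf M a a + c * (bf M a b + bf M b a) + c^2 * bf M b b"
proof -
  have "bf M (a + c *\<^sub>R b) (a + c *\<^sub>R b) = (\<Sum>r\<in>UNIV. \<Sum>s\<in>UNIV.
     M$r$s * a$r * a$s + c * (M$r$s * a$r * b$s + M$r$s * b$r * a$s) + c^2 * (M$r$s * b$r * b$s))"
    unfolding bf_def by (intro sum.cong refl) (simp add: algebra_simps power2_eq_square)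
  also have "\<dots> = bf M a a + c * (bf M a b + bf M b a) + c^2 * bf M b b"
    unfolding bf_def by (simp add: sum.distrib sum_distrib_left distrib_left)
  finally show ?thesis .
qed

lemma bf_scale: "bf M (c *\<^sub>R a) (c *\<^sub>R a) = c^2 * bf M a a"
  unfolding bf_def by (simp add: sum_distrib_left algebra_simps power2_eq_square)

lemma bf_zero: "bf M 0 0 = 0"
  unfolding bf_def by simp

lemma bf_sym: assumes "\<forall>r s. M$r$s = M$s$r" shows "bf M a b = bf M b a"
  unfolding bf_def
  by (subst sum.swap) (simp add: assms mult.commute mult.left_commute)

lemma bf_add_mat: "bf (M + N) a b = bf M a b + bf N a b"
  unfolding bf_def by (simp add: sum.distrib algebra_simps)

lemma bf_diff_mat: "bf (M - N) a b = bf M a b - bf N a b"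
  unfolding bf_def by (simp add: sum_subtractf algebra_simps)

lemma bf_scale_mat: "bf (c *\<^sub>R M) a b = c * bf M a b"
  unfolding bf_def by (simp add: sum_distrib_left algebra_simps)

lemma bf_axis: "bf M (axis i 1) (axis j 1) = M$i$j"
proof -
  have "\<And>r s. M$r$s * axis i 1 $ r * axis j 1 $ s = (if s = j then (if r = i then M$r$s else 0) else 0)"
    by (simp add: axis_def)
  then show ?thesis unfolding bf_def by simp
qed

lemma zero_diag:
  fixes C :: "real^'N::finite^'N"
  assumes sym: "\<forall>r s. C$r$s = C$s$r" and d: "\<forall>r. C$r$r = 0" and le: "\<forall>y. bf C y y \<le> 0"
  shows "\<forall>y. bf C y y = 0"
proof -
  have "C$r$s = 0" for r s
  proof (cases "r = s")
    case True then show ?thesis using d by simp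
  next
    case False
    have "bf C (axis r 1 + c *\<^sub>R axis s 1) (axis r 1 + c *\<^sub>R axis s 1) = 2 * c * C$r$s" for c
      by (simp add: bf_add_scale bf_axis d sym[rule_format, of s r])
    then have "2 * c * C$r$s \<le> 0" for c using le by metis
    from this[of 1] this[of "-1"] show ?thesis by simp
  qed
  then show ?thesis unfolding bf_def by simp
qed




lemma psd_decomp:
  fixes P :: "real^'N::finite^'N"
  assumes "\<forall>r s. P$r$s = P$s$r" and "\<forall>y. 0 \<le> bf P y y"
  shows "\<exists>(k::nat) v. \<forall>r s. P$r$s = (\<Sum>j<k. (v j :: real^'N) $ r * v j $ s)"
  using assms
proof (induction "card {i. P$i \<noteq> 0}" arbitrary: P rule: less_induct)
  case less
  note sym = less.prems(1) and pos = less.prems(2)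
  show ?case
  proof (cases "\<exists>i. P$i \<noteq> 0")
    case False
    then have "\<forall>r s. P$r$s = 0" by simp
    then show ?thesis by (intro exI[where x="0::nat"]) simp
  next
    case True
    then obtain i where i: "P$i \<noteq> 0" by blast
    have rowz: "P$j$s = 0" if "P$j$j = 0" for j s
    proof (rule ccontr)
      assume ne: "P$j$s \<noteq> 0"
      have "0 \<le> bf P (axis s 1 + c *\<^sub>R axis j 1) (axis s 1 + c *\<^sub>R axis j 1)" for c
        using pos by blast
      then have "0 \<le> P$s$s + c * (2 * P$j$s)" for c
        by (simp add: bf_add_scale bf_axis that sym[rule_format, of s j])
      from this[of "- (P$s$s + 1) / (2 * P$j$s)"] ne show False by simp
    qed
    have pii: "P$i$i > 0"
    proof -
      have "0 \<le> P$i$i" using pos[rule_format, of "axis i 1"] by (simp add: bf_axis)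
      moreover have "P$i$i \<noteq> 0"
      proof
        assume "P$i$i = 0"
        then have "P$i = 0" using rowz by (simp add: vec_eq_iff)
        with i show False by simp
      qed
      ultimately show ?thesis by simp
    qed
    define v where "v = (\<chi> s. P$i$s / sqrt (P$i$i))"
    define P' where "P' = (\<chi> r s. P$r$s - v$r * v$s)"
    have vv: "v$r * v$s = P$i$r * P$i$s / P$i$i" for r s
      using pii unfolding v_def by (simp add: real_sqrt_mult[symmetric])
    have sym': "\<forall>r s. P'$r$s = P'$s$r"
      unfolding P'_def using sym by (simp add: mult.commute)
    have pos': "\<forall>y. 0 \<le> bf P' y y"
    proof
      fix y :: "real^'N"
      define \<beta> where "\<beta> = bf P y (axis i 1)"
      have b2: "bf P (axis i 1) y = \<beta>" unfolding \<beta>_def by (rule bf_sym[OF sym])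
      have "0 \<le> bf P (y + (- \<beta> / P$i$i) *\<^sub>R axis i 1) (y + (- \<beta> / P$i$i) *\<^sub>R axis i 1)"
        using pos by blast
      also have "\<dots> = bf P y y - \<beta>^2 / P$i$i"
        unfolding bf_add_scale bf_axis b2 \<beta>_def[symmetric]
        using pii by (simp add: field_simps power2_eq_square)
      finally have ge: "0 \<le> bf P y y - \<beta>^2 / P$i$i" .
      have sv: "(\<Sum>r\<in>UNIV. v$r * y$r) = \<beta> / sqrt (P$i$i)"
      proof -
        have "\<beta> = (\<Sum>r\<in>UNIV. P$i$r * y$r)"
        proof -
          have "\<beta> = (\<Sum>r\<in>UNIV. \<Sum>s\<in>UNIV. if s = i then P$r$s * y$r else 0)"
            unfolding \<beta>_def bf_def by (intro sum.cong refl) (simp add: axis_def)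
          also have "\<dots> = (\<Sum>r\<in>UNIV. P$i$r * y$r)" using sym by simp
          finally show ?thesis .
        qed
        then show ?thesis unfolding v_def by (simp add: sum_divide_distrib algebra_simps)
      qed
      have "bf P' y y = bf P y y - (\<Sum>r\<in>UNIV. v$r * y$r) * (\<Sum>s\<in>UNIV. v$s * y$s)"
        unfolding bf_def P'_def
        by (simp add: sum_subtractf sum_product algebra_simps)
      also have "\<dots> = bf P y y - \<beta>^2 / P$i$i"
        using pii by (simp add: sv power2_eq_square)
      finally show "0 \<le> bf P' y y" using ge by simp
    qed
    have sub: "{j. P'$j \<noteq> 0} \<subset> {j. P$j \<noteq> 0}"
    proof -
      have "P'$i = 0" using pii by (simp add: vec_eq_iff P'_def vv)
      moreover have "P'$j = 0" if "P$j = 0" for j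
      proof -
        have "P$i$j = 0" using that sym by (metis zero_index)
        then show ?thesis using that by (simp add: vec_eq_iff P'_def vv)
      qed
      ultimately show ?thesis using i by blast
    qed
    then have "card {j. P'$j \<noteq> 0} < card {j. P$j \<noteq> 0}"
      by (intro psubset_card_mono) auto
    then obtain k :: nat and w where kw: "\<forall>r s. P'$r$s = (\<Sum>j<k. (w j :: real^'N) $ r * w j $ s)"
      using less.hyps sym' pos' by blast
    show ?thesis
    proof (intro exI allI)
      fix r s
      have "(\<Sum>j<Suc k. (w(k := v)) j $ r * (w(k := v)) j $ s) = (\<Sum>j<k. w j $ r * w j $ s) + v$r * v$s"
        by simp
      also have "\<dots> = P$r$s" using kw[rule_format, of r s] by (simp add: P'_def)
      finally show "P$r$s = (\<Sum>j<Suc k. (w(k := v)) j $ r * (w(k := v)) j $ s)" by simp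
    qed
  qed
qed




lemma finsler:
  fixes qa qc :: "'v::real_vector \<Rightarrow> real"
  assumes sa: "\<And>c y. qa (c *\<^sub>R y) = c^2 * qa y"
    and sc: "\<And>c y. qc (c *\<^sub>R y) = c^2 * qc y"
    and H: "\<And>y z. qc y + qc z = 0 \<Longrightarrow> 0 \<le> qa y + qa z"
    and np: "(\<forall>y. qc y \<le> 0) \<Longrightarrow> (\<forall>y. qc y = 0)"
    and nn: "(\<forall>y. qc y \<ge> 0) \<Longrightarrow> (\<forall>y. qc y = 0)"
  shows "\<exists>t. \<forall>y. 0 \<le> qa y + t * qc y"
proof -
  have a0: "qa 0 = 0" using sa[of 0 0] by simp
  have c0: "qc 0 = 0" using sc[of 0 0] by simp
  have H1: "0 \<le> qa y" if "qc y = 0" for y using H[of y 0] that a0 c0 by simp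
  show ?thesis
  proof (cases "\<forall>y. qc y = 0")
    case True then show ?thesis using H1 by (intro exI[of _ 0]) simp
  next
    case False
    have "\<exists>y. qc y > 0" using np False by (meson not_le)
    then obtain y1 where y1: "qc y1 > 0" by blast
    have "\<exists>y. qc y < 0" using nn False by (meson not_le)
    then obtain z1 where z1: "qc z1 < 0" by blast
    define ell where "ell y = - qa y / qc y" for y
    have key: "ell y \<le> ell z" if y: "qc y > 0" and z: "qc z < 0" for y z
    proof -
      define p where "p = qc y"
      define q where "q = - qc z"
      have p: "p > 0" and q: "q > 0" using y z p_def q_def by auto
      have "qc (sqrt q *\<^sub>R y) + qc (sqrt p *\<^sub>R z) = 0"
        using p q by (simp add: sc p_def q_def)
      then have "0 \<le> qa (sqrt q *\<^sub>R y) + qa (sqrt p *\<^sub>R z)" by (rule H)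
      then have "0 \<le> q * qa y + p * qa z" using p q by (simp add: sa)
      then have "0 \<le> (q * qa y + p * qa z) / (p * q)" using p q by simp
      then have "0 \<le> qa y / p + qa z / q" using p q by (simp add: field_simps)
      moreover have "ell y = - (qa y / p)" unfolding ell_def p_def by simp
      moreover have "ell z = qa z / q" unfolding ell_def q_def by simp
      ultimately show ?thesis by linarith
    qed
    define S where "S = ell ` {y. qc y > 0}"
    define t where "t = Sup S"
    have Sne: "S \<noteq> {}" using y1 S_def by auto
    have Sbdd: "bdd_above S" unfolding S_def bdd_above_def using key z1 by blast
    have t1: "ell y \<le> t" if "qc y > 0" for y
      unfolding t_def using Sbdd that S_def by (auto intro: cSup_upper)
    have t2: "t \<le> ell z" if "qc z < 0" for z
      unfolding t_def using Sne that S_def key by (auto intro!: cSup_least)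
    show ?thesis
    proof (intro exI allI)
      fix y
      consider "qc y > 0" | "qc y < 0" | "qc y = 0" by linarith
      then show "0 \<le> qa y + t * qc y"
      proof cases
        case 1
        have "- qa y / qc y \<le> t" using t1[OF 1] unfolding ell_def .
        then have "- qa y \<le> t * qc y" using 1 pos_divide_le_eq[of "qc y" "- qa y" t] by simp
        then show ?thesis by simp
      next
        case 2
        have "t \<le> - qa y / qc y" using t2[OF 2] unfolding ell_def .
        then have "- qa y \<le> t * qc y" using 2 neg_le_divide_eq[of "qc y" t "- qa y"] by simp
        then show ?thesis by simp
      next
        case 3 then show ?thesis using H1 by simp
      qed
    qed
  qed
qed




lemma quad_complex:
  fixes B G :: "real^'N::finite^'N" and a b :: "real^'N"
  assumes sB: "\<forall>r s. B$r$s = B$s$r" and sG: "\<forall>r s. G$r$s = G$s$r"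
  shows "(\<Sum>r\<in>UNIV. cnj ((\<chi> r. Complex (a$r) (b$r)) $ r) *
      ((\<chi> r s. complex_of_real (B$r$s) + \<i> * complex_of_real (G$r$s)) *v (\<chi> r. Complex (a$r) (b$r))) $ r)
    = Complex (bf B a a + bf B b b) (bf G a a + bf G b b)" (is "?L = _")
proof -
  have L: "?L = (\<Sum>r\<in>UNIV. \<Sum>s\<in>UNIV. cnj (Complex (a$r) (b$r)) *
        (Complex (B$r$s) (G$r$s) * Complex (a$s) (b$s)))"
    unfolding matrix_vector_mult_def
    by (simp add: sum_distrib_left complex_eq_iff)
  have re: "Re ?L = (\<Sum>r\<in>UNIV. \<Sum>s\<in>UNIV. B$r$s * a$r * a$s + B$r$s * b$r * b$s
        - (G$r$s * a$r * b$s - G$r$s * b$r * a$s))"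
    unfolding L Re_sum by (intro sum.cong refl) (simp add: algebra_simps)
  have im: "Im ?L = (\<Sum>r\<in>UNIV. \<Sum>s\<in>UNIV. G$r$s * a$r * a$s + G$r$s * b$r * b$s
        + (B$r$s * a$r * b$s - B$r$s * b$r * a$s))"
    unfolding L Im_sum by (intro sum.cong refl) (simp add: algebra_simps)
  have "Re ?L = bf B a a + bf B b b - (bf G a b - bf G b a)"
    unfolding re bf_def by (simp add: sum.distrib sum_subtractf)
  also have "\<dots> = bf B a a + bf B b b" using bf_sym[OF sG, of a b] by simp
  finally have 1: "Re ?L = bf B a a + bf B b b" .
  have "Im ?L = bf G a a + bf G b b + (bf B a b - bf B b a)"
    unfolding im bf_def by (simp add: sum.distrib sum_subtractf)
  also have "\<dots> = bf G a a + bf G b b" using bf_sym[OF sB, of a b] by simp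
  finally have 2: "Im ?L = bf G a a + bf G b b" .
  show ?thesis using 1 2 by (simp add: complex_eq_iff)
qed

lemma W1i_bdd: "bdd_below (W1i B)"
proof -
  define M where "M = (\<chi> r s. complex_of_real (B $ r $ s) + \<i> * complex_of_real (partial_transpose B $ r $ s))"
  define K where "K = (\<Sum>r\<in>UNIV. \<Sum>s\<in>UNIV. cmod (M$r$s))"
  have "- K \<le> c" if "c \<in> W1i B" for c
  proof -
    from that obtain x :: "complex^_" where x: "norm x = 1"
      and eq: "complex_of_real c * (1 + \<i>) = (\<Sum>i\<in>UNIV. cnj (x $ i) * (M *v x) $ i)"
      unfolding W1i_def numerical_range_def M_def by auto
    have xi: "cmod (x$i) \<le> 1" for i using Finite_Cartesian_Product.norm_nth_le[of x i] x by simp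
    have "cmod ((M *v x) $ r) \<le> (\<Sum>s\<in>UNIV. cmod (M$r$s))" for r
    proof -
      have "cmod ((M *v x) $ r) \<le> (\<Sum>s\<in>UNIV. cmod (M$r$s * x$s))"
        unfolding matrix_vector_mult_def by (simp add: norm_sum)
      also have "\<dots> \<le> (\<Sum>s\<in>UNIV. cmod (M$r$s))"
        by (intro sum_mono) (simp add: norm_mult mult_left_le xi)
      finally show ?thesis .
    qed
    then have "cmod (\<Sum>i\<in>UNIV. cnj (x $ i) * (M *v x) $ i) \<le> K"
      unfolding K_def
    proof (intro order.trans[OF norm_sum] sum_mono)
      fix r
      assume *: "\<And>r. cmod ((M *v x) $ r) \<le> (\<Sum>s\<in>UNIV. cmod (M$r$s))"
      have "cmod (cnj (x $ r) * (M *v x) $ r) = cmod (x$r) * cmod ((M *v x) $ r)"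
        by (simp add: norm_mult)
      also have "\<dots> \<le> cmod ((M *v x) $ r)"
        using xi[of r] by (simp add: mult_left_le_one_le)
      also have "\<dots> \<le> (\<Sum>s\<in>UNIV. cmod (M$r$s))" by (rule *)
      finally show "cmod (cnj (x $ r) * (M *v x) $ r) \<le> (\<Sum>s\<in>UNIV. cmod (M$r$s))" .
    qed
    moreover have "c = Re (complex_of_real c * (1 + \<i>))" by simp
    ultimately have "\<bar>c\<bar> \<le> K" using eq abs_Re_le_cmod by (metis order.trans)
    then show ?thesis by simp
  qed
  then show ?thesis unfolding bdd_below_def by blast
qed




lemma linear_sandwich: "linear (\<lambda>X::real^'a::finite^'a. (A::real^'a^'b::finite) ** X ** transpose A)"
  by (intro linearI)
     (simp_all add: vec_eq_iff matrix_matrix_mult_def sum.distrib algebra_simps sum_distrib_left)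

lemma sum_mat_vec: "(sum (S::'j \<Rightarrow> real^'a::finite^'b::finite) J) *v v = (\<Sum>j\<in>J. S j *v v)"
proof (cases "finite J")
  case True then show ?thesis
    by (induction J rule: finite_induct) (simp_all add: matrix_vector_mult_add_rdistrib)
next
  case False then show ?thesis by simp
qed

lemma psd_sandwich:
  assumes "psd (X::real^'a::finite^'a)"
  shows "0 \<le> v \<bullet> (((A::real^'a^'b::finite) ** X ** transpose A) *v v)"
proof -
  have "v \<bullet> ((A ** X ** transpose A) *v v) = (transpose A *v v) \<bullet> (X *v (transpose A *v v))"
    by (simp add: matrix_vector_mul_assoc[symmetric] dot_lmul_matrix[symmetric] transpose_matrix_vector)
  then show ?thesis using assms unfolding psd_def by simp
qed

lemma mat_unit_entry: "mat_unit i j $ a $ b = (if a = i \<and> b = j then 1 else 0)"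
  unfolding mat_unit_def by simp

lemma mat_decomp: "X = (\<Sum>i\<in>UNIV. \<Sum>j\<in>UNIV. X$i$j *\<^sub>R mat_unit i j)"
proof -
  have "\<And>a b i j. X$i$j * mat_unit i j $ a $ b = (if j = b then (if i = a then X$i$j else 0) else 0)"
    by (auto simp: mat_unit_entry)
  then show ?thesis by (simp add: vec_eq_iff sum_component)
qed




theorem theorem4p3:
  fixes \<Phi> :: "real^'m::finite^'m \<Rightarrow> real^'n::finite^'n"
  assumes "linear \<Phi>"
    and "transpose_preserving \<Phi>"
    and "W1i_min (choi \<Phi>) \<ge> 0"
  shows "(\<exists>(k::nat) (A :: nat \<Rightarrow> real^'m^'n) (\<Psi> :: real^'m^'m \<Rightarrow> real^'n^'n).
            linear \<Psi> \<and> (\<forall>X. transpose X = X \<longrightarrow> \<Psi> X = 0) \<and>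
            (\<forall>X. \<Phi> X = (\<Sum>j<k. A j ** X ** transpose (A j)) + \<Psi> X))
         \<and> positive_map \<Phi>"
proof -
  note lin = assms(1) and tp = assms(2)[unfolded transpose_preserving_def, rule_format]
  define B where "B = choi \<Phi>"
  define G where "G = partial_transpose B"
  define f where "f i j k l = \<Phi> (mat_unit i j) $ k $ l" for i j k l
  have L1: "B$r$s = f (fst r) (fst s) (snd r) (snd s)" for r s
  proof -
    have "\<And>i j. mat_unit i j $ fst r $ fst s * \<Phi> (mat_unit i j) $ snd r $ snd s
       = (if j = fst s then (if i = fst r then f i j (snd r) (snd s) else 0) else 0)"
      by (auto simp: mat_unit_entry f_def)
    then show ?thesis unfolding B_def choi_def by simp
  qed
  have L2: "G$r$s = f (fst r) (fst s) (snd s) (snd r)" for r s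
    unfolding G_def partial_transpose_def by (simp add: L1)
  have L3: "f j i l k = f i j k l" for i j k l
  proof -
    have "transpose (mat_unit i j) = mat_unit j i"
      by (auto simp: vec_eq_iff transpose_def mat_unit_entry)
    then have "\<Phi> (mat_unit j i) = transpose (\<Phi> (mat_unit i j))" using tp by metis
    then show ?thesis unfolding f_def by (simp add: transpose_def)
  qed
  have sB: "\<forall>r s. B$r$s = B$s$r" using L1 L3 by simp
  have sG: "\<forall>r s. G$r$s = G$s$r" using L2 L3 by simp
  have L4: "\<Phi> X $ k $ l = (\<Sum>i\<in>UNIV. \<Sum>j\<in>UNIV. X$i$j * f i j k l)" for X k l
  proof -
    have "\<Phi> X = (\<Sum>i\<in>UNIV. \<Sum>j\<in>UNIV. X$i$j *\<^sub>R \<Phi> (mat_unit i j))"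
      by (subst mat_decomp) (simp add: linear_sum[OF lin] linear_scale[OF lin])
    then show ?thesis by (simp add: sum_component f_def)
  qed
  have symPhi: "\<Phi> X $ l $ k = \<Phi> X $ k $ l" if "transpose X = X" for X k l
  proof -
    have "\<Phi> X $ l $ k = transpose (\<Phi> X) $ k $ l" by (simp add: transpose_def)
    also have "\<dots> = \<Phi> X $ k $ l" using tp[of X] that by simp
    finally show ?thesis .
  qed
  have H: "0 \<le> bf B y y + bf B z z" if eq: "bf B y y + bf B z z = bf G y y + bf G z z" for y z
  proof (cases "y = 0 \<and> z = 0")
    case True then show ?thesis by (simp add: bf_zero)
  next
    case False
    define nn where "nn = (\<Sum>r\<in>UNIV. (y$r)^2 + (z$r)^2)"
    have nnpos: "nn > 0"
    proof -
      from False obtain r where "y$r \<noteq> 0 \<or> z$r \<noteq> 0" by (auto simp: vec_eq_iff)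
      then have "(y$r)^2 + (z$r)^2 > 0" by (auto simp: add_pos_nonneg add_nonneg_pos)
      then show ?thesis unfolding nn_def
        by (intro sum_pos2[of UNIV r]) auto
    qed
    define a where "a = (1 / sqrt nn) *\<^sub>R y"
    define b where "b = (1 / sqrt nn) *\<^sub>R z"
    define x where "x = (\<chi> r. Complex (a$r) (b$r))"
    have nx: "norm x = 1"
    proof -
      have "norm x = sqrt (\<Sum>r\<in>UNIV. (a$r)^2 + (b$r)^2)"
        unfolding norm_vec_def L2_set_def x_def by (simp add: complex_norm)
      also have "(\<Sum>r\<in>UNIV. (a$r)^2 + (b$r)^2) = nn / nn"
      proof -
        have "(a$r)^2 + (b$r)^2 = ((y$r)^2 + (z$r)^2) / nn" for r
          using nnpos by (simp add: a_def b_def power_divide add_divide_distrib)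
        then show ?thesis by (simp add: sum_divide_distrib[symmetric] nn_def)
      qed
      finally show ?thesis using nnpos by simp
    qed
    define c where "c = (bf B y y + bf B z z) / nn"
    have ca: "bf B a a + bf B b b = c" "bf G a a + bf G b b = c"
      unfolding a_def b_def c_def bf_scale using nnpos eq
      by (simp_all add: power_divide add_divide_distrib[symmetric])
    have "complex_of_real c * (1 + \<i>) \<in> numerical_range
       (\<chi> r s. complex_of_real (B $ r $ s) + \<i> * complex_of_real (partial_transpose B $ r $ s))"
      unfolding numerical_range_def
    proof (intro CollectI exI conjI)
      show "norm x = 1" by (rule nx)
      show "complex_of_real c * (1 + \<i>) = (\<Sum>i\<in>UNIV. cnj (x $ i) *
        ((\<chi> r s. complex_of_real (B $ r $ s) + \<i> * complex_of_real (partial_transpose B $ r $ s)) *v x) $ i)"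
        unfolding x_def G_def[symmetric] quad_complex[OF sB sG] ca
        by (simp add: complex_eq_iff)
    qed
    then have "c \<in> W1i B" unfolding W1i_def by simp
    then have "W1i_min B \<le> c" unfolding W1i_min_def by (rule cInf_lower[OF _ W1i_bdd])
    then have "0 \<le> c" using assms(3) B_def by simp
    then show ?thesis unfolding c_def using nnpos by (simp add: zero_le_divide_iff)
  qed
  define qa where "qa y = bf B y y" for y
  define qc where "qc y = bf (B - G) y y" for y
  have qc': "qc y = bf B y y - bf G y y" for y unfolding qc_def by (simp add: bf_diff_mat)
  have diag: "\<forall>r. (B - G)$r$r = 0" by (simp add: L1 L2)
  obtain t where t: "\<forall>y. 0 \<le> qa y + t * qc y"
  proof (atomize_elim, rule finsler)
    show "qa (c *\<^sub>R y) = c^2 * qa y" for c y unfolding qa_def by (rule bf_scale)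
    show "qc (c *\<^sub>R y) = c^2 * qc y" for c y unfolding qc_def by (rule bf_scale)
    show "0 \<le> qa y + qa z" if "qc y + qc z = 0" for y z
      using H[of y z] that unfolding qa_def qc' by simp
    show "\<forall>y. qc y = 0" if "\<forall>y. qc y \<le> 0"
      unfolding qc_def by (rule zero_diag) (use that sB sG diag in \<open>auto simp: qc_def\<close>)
    show "\<forall>y. qc y = 0" if "\<forall>y. qc y \<ge> 0"
    proof -
      have "\<forall>y. bf (G - B) y y = 0"
        by (rule zero_diag) (use that sB sG diag in \<open>auto simp: qc' bf_diff_mat\<close>)
      then show ?thesis by (simp add: qc' bf_diff_mat)
    qed
  qed
  define P where "P = B + t *\<^sub>R (B - G)"
  have sP: "\<forall>r s. P$r$s = P$s$r" unfolding P_def using sB sG by simp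
  have pP: "\<forall>y. 0 \<le> bf P y y"
    using t unfolding P_def qa_def qc_def by (simp add: bf_add_mat bf_scale_mat)
  obtain k :: nat and v where kv: "\<forall>r s. P$r$s = (\<Sum>j<k. (v j :: real^('m\<times>'n)) $ r * v j $ s)"
    using psd_decomp[OF sP pP] by blast
  define A :: "nat \<Rightarrow> real^'m^'n" where "A j = (\<chi> kk ii. v j $ (ii, kk))" for j
  have main: "\<Phi> X = (\<Sum>j<k. A j ** X ** transpose (A j))" if sX: "transpose X = X" for X
  proof (subst vec_eq_iff, intro allI, subst vec_eq_iff, intro allI)
    fix kk ll
    have "(\<Sum>j<k. A j ** X ** transpose (A j)) $ kk $ ll
        = (\<Sum>j<k. \<Sum>b\<in>UNIV. \<Sum>a\<in>UNIV. v j $ (a, kk) * X$a$b * v j $ (b, ll))"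
      by (simp add: sum_component matrix_matrix_mult_def transpose_def A_def sum_distrib_right)
    also have "\<dots> = (\<Sum>a\<in>UNIV. \<Sum>b\<in>UNIV. X$a$b * (\<Sum>j<k. v j $ (a, kk) * v j $ (b, ll)))"
    proof -
      have "(\<Sum>j<k. \<Sum>b\<in>UNIV. \<Sum>a\<in>UNIV. v j $ (a, kk) * X$a$b * v j $ (b, ll))
          = (\<Sum>b\<in>UNIV. \<Sum>j<k. \<Sum>a\<in>UNIV. v j $ (a, kk) * X$a$b * v j $ (b, ll))"
        by (rule sum.swap)
      also have "\<dots> = (\<Sum>b\<in>UNIV. \<Sum>a\<in>UNIV. \<Sum>j<k. v j $ (a, kk) * X$a$b * v j $ (b, ll))"
        by (intro sum.cong refl) (rule sum.swap)
      also have "\<dots> = (\<Sum>a\<in>UNIV. \<Sum>b\<in>UNIV. \<Sum>j<k. v j $ (a, kk) * X$a$b * v j $ (b, ll))"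
        by (rule sum.swap)
      also have "\<dots> = (\<Sum>a\<in>UNIV. \<Sum>b\<in>UNIV. X$a$b * (\<Sum>j<k. v j $ (a, kk) * v j $ (b, ll)))"
        by (simp add: sum_distrib_left algebra_simps)
      finally show ?thesis .
    qed
    also have "\<dots> = (\<Sum>a\<in>UNIV. \<Sum>b\<in>UNIV. X$a$b * P$(a,kk)$(b,ll))"
      using kv by simp
    also have "\<dots> = (\<Sum>a\<in>UNIV. \<Sum>b\<in>UNIV. X$a$b * f a b kk ll)
        + t * ((\<Sum>a\<in>UNIV. \<Sum>b\<in>UNIV. X$a$b * f a b kk ll) - (\<Sum>a\<in>UNIV. \<Sum>b\<in>UNIV. X$a$b * f a b ll kk))"
      unfolding P_def
      by (simp add: L1 L2 algebra_simps sum.distrib sum_subtractf sum_distrib_left)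
    also have "\<dots> = \<Phi> X $ kk $ ll"
      using symPhi[OF sX, of kk ll] by (simp add: L4[symmetric])
    finally show "\<Phi> X $ kk $ ll = (\<Sum>j<k. A j ** X ** transpose (A j)) $ kk $ ll" by simp
  qed
  define \<Psi> where "\<Psi> X = \<Phi> X - (\<Sum>j<k. A j ** X ** transpose (A j))" for X
  have linPsi: "linear \<Psi>"
    unfolding \<Psi>_def
    by (intro module_hom_sub lin linear_compose_sum ballI linear_sandwich)
  have part1: "\<exists>(k::nat) (A :: nat \<Rightarrow> real^'m^'n) (\<Psi> :: real^'m^'m \<Rightarrow> real^'n^'n).
            linear \<Psi> \<and> (\<forall>X. transpose X = X \<longrightarrow> \<Psi> X = 0) \<and>
            (\<forall>X. \<Phi> X = (\<Sum>j<k. A j ** X ** transpose (A j)) + \<Psi> X)"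
    by (intro exI[of _ k] exI[of _ A] exI[of _ \<Psi>] conjI allI impI linPsi)
       (simp_all add: \<Psi>_def main)
  have part2: "positive_map \<Phi>"
    unfolding positive_map_def
  proof (intro allI impI)
    fix X :: "real^'m^'m" assume pX: "psd X"
    then have sX: "transpose X = X" unfolding psd_def by simp
    show "psd (\<Phi> X)" unfolding psd_def
    proof (intro conjI allI)
      show "transpose (\<Phi> X) = \<Phi> X" using tp[of X] sX by simp
      fix w :: "real^'n"
      have "w \<bullet> (\<Phi> X *v w) = (\<Sum>j<k. w \<bullet> ((A j ** X ** transpose (A j)) *v w))"
        by (simp add: main[OF sX] sum_mat_vec inner_sum_right)
      also have "\<dots> \<ge> 0" by (intro sum_nonneg psd_sandwich pX)
      finally show "0 \<le> w \<bullet> (\<Phi> X *v w)" .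
    qed
  qed
  show ?thesis using part1 part2 by blast
qed


end
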